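(* Let $\mathbb{F}$ be a field, $A\in\mathbb{F}^{n\times n}$ such that a product of a row vector by $A$ costs at most $\mu$ arithmetic operations, $V_0\in\mathbb{F}^n$, and let a list of $d$ vectors $V_0,V_1,\dots,V_{d-1}\in\mathbb{F}^n$ be given. Consider the following check (for a finite subset $\mathbb{S}\subseteq\mathbb{F}$): uniformly sample $Y\in\mathbb{S}^n$, compute $H=Y^TA$, and accept iff $HV_{i-1}=Y^TV_i$ for every $i=1,\dots,d-1$. This check is perfectly complete (if $V_i=A^iV_0$ for all $i$ it always accepts), sound (if $V_i\neq A^iV_0$ for some $i$, it accepts with probability at most $1/|\mathbb{S}|$), and requires $\mu+4dn$ arithmetic operations.
   Context: Arithmetic operations are field operations in $\mathbb{F}$; equality tests and random sampling are not counted. *)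

theory Defs
  imports "HOL-Probability.Probability" "Jordan_Normal_Form.Matrix"
begin

text \<open>Operation-counting model: every field addition/multiplication costs 1.
  dot_cnt xs ys computes the dot product of two equal-length lists together with
  the number of field operations used (n multiplications and n-1 additions).\<close>

fun dot_cnt :: "'a::field list \<Rightarrow> 'a list \<Rightarrow> 'a \<times> nat" where
  "dot_cnt [x] [y] = (x * y, 1)"
| "dot_cnt (x # xs) (y # ys) = (let (s, c) = dot_cnt xs ys in (x * y + s, c + 2))"
| "dot_cnt _ _ = (0, 0)"

text \<open>The row vector Y^T A is represented as the (column) vector transpose A * Y.
  The procedure rowmul returns Y^T A together with the number of operations it used.\<close>

definition rowmul_spec :: "'a::field mat \<Rightarrow> nat \<Rightarrow> nat \<Rightarrow> ('a vec \<Rightarrow> 'a vec \<times> nat) \<Rightarrow> bool" where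
  "rowmul_spec A n \<mu> rowmul \<longleftrightarrow>
     (\<forall>Y \<in> carrier_vec n. fst (rowmul Y) = transpose_mat A *\<^sub>v Y \<and> snd (rowmul Y) \<le> \<mu>)"

definition check_run ::
  "('a::field vec \<Rightarrow> 'a vec \<times> nat) \<Rightarrow> nat \<Rightarrow> (nat \<Rightarrow> 'a vec) \<Rightarrow> 'a vec \<Rightarrow> bool \<times> nat" where
  "check_run rowmul d V Y =
     (let (H, c0) = rowmul Y;
          rs = map (\<lambda>i. (dot_cnt (list_of_vec H) (list_of_vec (V (i - 1))),
                         dot_cnt (list_of_vec Y) (list_of_vec (V i)))) [1..<d]
      in (list_all (\<lambda>(p, q). fst p = fst q) rs,
          c0 + sum_list (map (\<lambda>(p, q). snd p + snd q) rs)))"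

definition sample_space :: "nat \<Rightarrow> 'a set \<Rightarrow> 'a vec set" where
  "sample_space n S = {Y \<in> carrier_vec n. \<forall>j<n. Y $ j \<in> S}"

end

theory Submission
  imports Defs
begin

lemma dot_cnt_fst: "length xs = length ys \<Longrightarrow>
  fst (dot_cnt xs ys) = (\<Sum>i<length xs. xs ! i * ys ! i)"
  by (induction xs ys rule: dot_cnt.induct) (auto simp: split_beta sum.lessThan_Suc_shift simp del: sum.lessThan_Suc)

lemma dot_cnt_snd: "snd (dot_cnt xs ys) \<le> 2 * length xs"
  by (induction xs ys rule: dot_cnt.induct) (auto simp: split_beta)

lemma dot_cnt_vec:
  assumes "u \<in> carrier_vec n" "v \<in> carrier_vec n"
  shows "fst (dot_cnt (list_of_vec u) (list_of_vec v)) = u \<bullet> v"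
  using assms by (simp add: dot_cnt_fst scalar_prod_def atLeast0LessThan)

lemma pow_mat_Suc_left:
  assumes A: "A \<in> carrier_mat n n"
  shows "A ^\<^sub>m Suc k = A * A ^\<^sub>m k"
proof (induction k)
  case 0 then show ?case using A by simp
next
  case (Suc k)
  have "A ^\<^sub>m Suc (Suc k) = (A * A ^\<^sub>m k) * A" using Suc by simp
  also have "\<dots> = A * (A ^\<^sub>m k * A)" using A by (simp add: assoc_mult_mat[of _ n n _ n _ n])
  finally show ?case by simp
qed

lemma sample_space_finite:
  assumes "finite S" shows "finite (sample_space n S)"
proof -
  have "sample_space n S \<subseteq> (\<lambda>f. vec n f) ` (PiE {..<n} (\<lambda>_. S))"
  proof
    fix Y assume Y: "Y \<in> sample_space n S"
    have "Y = vec n (restrict (\<lambda>k. Y $ k) {..<n})"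
      using Y by (intro eq_vecI) (auto simp: sample_space_def)
    moreover have "restrict (\<lambda>k. Y $ k) {..<n} \<in> PiE {..<n} (\<lambda>_. S)"
      using Y by (auto simp: sample_space_def)
    ultimately show "Y \<in> (\<lambda>f. vec n f) ` (PiE {..<n} (\<lambda>_. S))" by blast
  qed
  moreover have "finite (PiE {..<n} (\<lambda>_. S))" using assms by (simp add: finite_PiE)
  ultimately show ?thesis using finite_subset by blast
qed

lemma sample_space_nonempty:
  assumes "S \<noteq> {}" shows "sample_space n S \<noteq> {}"
proof -
  obtain s where "s \<in> S" using assms by blast
  then have "vec n (\<lambda>_. s) \<in> sample_space n S" by (auto simp: sample_space_def)
  then show ?thesis by blast
qed

lemma count_bound:
  fixes w :: "'a::field vec"
  assumes w: "w \<in> carrier_vec n" "w \<noteq> 0\<^sub>v n" and S: "finite S" "S \<noteq> {}"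
  shows "card {Y \<in> sample_space n S. Y \<bullet> w = 0} * card S \<le> card (sample_space n S)"
proof -
  define \<Omega> where "\<Omega> = sample_space n S"
  define B where "B = {Y \<in> \<Omega>. Y \<bullet> w = 0}"
  obtain j where j: "j < n" "w $ j \<noteq> 0"
    using w by (metis eq_vecI carrier_vecD index_zero_vec(1) index_zero_vec(2))
  define g where "g = (\<lambda>(Y::'a vec, s). vec n (\<lambda>k. if k = j then s else Y $ k))"
  have fin: "finite \<Omega>" using S sample_space_finite unfolding \<Omega>_def by blast
  have img: "g ` (B \<times> S) \<subseteq> \<Omega>"
    by (auto simp: g_def B_def \<Omega>_def sample_space_def)
  have inj0: "\<And>Y s Y' s'. (Y, s) \<in> B \<times> S \<Longrightarrow> (Y', s') \<in> B \<times> S \<Longrightarrow> g (Y, s) = g (Y', s') \<Longrightarrow> Y = Y' \<and> s = s'"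
  proof -
    fix Y s Y' s' assume Y: "(Y, s) \<in> B \<times> S" and Y': "(Y', s') \<in> B \<times> S" and eq: "g (Y, s) = g (Y', s')"
    have eqv: "vec n (\<lambda>k. if k = j then s else Y $ k) = vec n (\<lambda>k. if k = j then s' else Y' $ k)"
      using eq by (simp add: g_def)
    have ix: "\<And>k. vec n (\<lambda>k. if k = j then s else Y $ k) $ k = vec n (\<lambda>k. if k = j then s' else Y' $ k) $ k"
      by (simp only: eqv)
    have "s = s'" using ix[of j] j by simp
    have off: "\<And>k. k < n \<Longrightarrow> k \<noteq> j \<Longrightarrow> Y $ k = Y' $ k"
    proof -
      fix k assume k: "k < n" "k \<noteq> j"
      show "Y $ k = Y' $ k" using ix[of k] k by simp
    qed
    have Yc: "Y \<in> carrier_vec n" "Y' \<in> carrier_vec n"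
      using Y Y' by (auto simp: B_def \<Omega>_def sample_space_def)
    have "Y - Y' = (Y $ j - Y' $ j) \<cdot>\<^sub>v unit_vec n j"
      using Yc off j by (intro eq_vecI) (auto simp: unit_vec_def)
    moreover have "(Y - Y') \<bullet> w = 0"
      using Y Y' Yc w by (simp add: minus_scalar_prod_distrib[of _ n] B_def)
    ultimately have "((Y $ j - Y' $ j) \<cdot>\<^sub>v unit_vec n j) \<bullet> w = 0" by simp
    then have "(Y $ j - Y' $ j) * w $ j = 0"
      using w j by (simp add: smult_scalar_prod_distrib[of _ n] scalar_prod_left_unit)
    then have "Y $ j = Y' $ j" using j by simp
    then have "Y = Y'" using Yc off by (intro eq_vecI) auto
    then show "Y = Y' \<and> s = s'" using \<open>s = s'\<close> by simp
  qed
  have inj: "inj_on g (B \<times> S)"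
    by (rule inj_onI) (metis inj0 prod.collapse)
  have "card (B \<times> S) \<le> card \<Omega>" by (rule card_inj_on_le[OF inj img fin])
  then show ?thesis by (simp add: card_cartesian_product B_def \<Omega>_def)
qed

lemma check_fst_gen: "rowmul Y = (H, c) \<Longrightarrow> fst (check_run rowmul d V Y) = (\<forall>i\<in>{1..<d}. fst (dot_cnt (list_of_vec H) (list_of_vec (V (i-1)))) = fst (dot_cnt (list_of_vec Y) (list_of_vec (V i))))"
  by (simp add: check_run_def list_all_iff)
lemma check_snd_gen: "rowmul Y = (H, c) \<Longrightarrow> snd (check_run rowmul d V Y) = c + sum_list (map (\<lambda>i. snd (dot_cnt (list_of_vec H) (list_of_vec (V (i-1)))) + snd (dot_cnt (list_of_vec Y) (list_of_vec (V i)))) [1..<d])"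
  by (simp add: check_run_def comp_def)

lemma check_fst:
  assumes mu: "rowmul_spec A n \<mu> rowmul" and V: "\<forall>i<d. V i \<in> carrier_vec n"
    and A: "A \<in> carrier_mat n n" and Y: "Y \<in> carrier_vec n"
  shows "fst (check_run rowmul d V Y) \<longleftrightarrow>
    (\<forall>i\<in>{1..<d}. (transpose_mat A *\<^sub>v Y) \<bullet> V (i - 1) = Y \<bullet> V i)"
proof -
  have H: "fst (rowmul Y) = transpose_mat A *\<^sub>v Y" using mu Y by (simp add: rowmul_spec_def)
  have Hc: "transpose_mat A *\<^sub>v Y \<in> carrier_vec n" using A by (intro carrier_vecI) auto
  have e: "\<And>i. i \<in> {1..<d} \<Longrightarrow>
      (fst (dot_cnt (list_of_vec (transpose_mat A *\<^sub>v Y)) (list_of_vec (V (i - 1))))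
        = fst (dot_cnt (list_of_vec Y) (list_of_vec (V i))))
      = ((transpose_mat A *\<^sub>v Y) \<bullet> V (i - 1) = Y \<bullet> V i)"
  proof -
    fix i assume i: "i \<in> {1..<d}"
    have c: "V (i - 1) \<in> carrier_vec n" "V i \<in> carrier_vec n" using V i by auto
    show "?thesis i" unfolding dot_cnt_vec[OF Hc c(1)] dot_cnt_vec[OF Y c(2)] ..
  qed
  have 1: "fst (check_run rowmul d V Y) = (\<forall>i\<in>{1..<d}.
      fst (dot_cnt (list_of_vec (transpose_mat A *\<^sub>v Y)) (list_of_vec (V (i - 1))))
        = fst (dot_cnt (list_of_vec Y) (list_of_vec (V i))))"
  proof -
    have rY: "rowmul Y = (transpose_mat A *\<^sub>v Y, snd (rowmul Y))" using H by (metis prod.collapse)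
    show ?thesis by (rule check_fst_gen[of rowmul Y "transpose_mat A *\<^sub>v Y" "snd (rowmul Y)" d V, OF rY])
  qed
  show ?thesis unfolding 1
  proof (intro iffI ballI)
    fix i assume a: "\<forall>i\<in>{1..<d}.
      fst (dot_cnt (list_of_vec (transpose_mat A *\<^sub>v Y)) (list_of_vec (V (i - 1))))
        = fst (dot_cnt (list_of_vec Y) (list_of_vec (V i)))" and i: "i \<in> {1..<d}"
    show "(transpose_mat A *\<^sub>v Y) \<bullet> V (i - 1) = Y \<bullet> V i"
      by (rule iffD1[OF e[OF i] bspec[OF a i]])
  next
    fix i assume a: "\<forall>i\<in>{1..<d}. (transpose_mat A *\<^sub>v Y) \<bullet> V (i - 1) = Y \<bullet> V i"
      and i: "i \<in> {1..<d}"
    show "fst (dot_cnt (list_of_vec (transpose_mat A *\<^sub>v Y)) (list_of_vec (V (i - 1))))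
        = fst (dot_cnt (list_of_vec Y) (list_of_vec (V i)))"
      by (rule iffD2[OF e[OF i] bspec[OF a i]])
  qed
qed

lemma check_snd:
  assumes mu: "rowmul_spec A n \<mu> rowmul" and V: "\<forall>i<d. V i \<in> carrier_vec n"
    and A: "A \<in> carrier_mat n n" and Y: "Y \<in> carrier_vec n"
  shows "snd (check_run rowmul d V Y) \<le> \<mu> + 4 * d * n"
proof -
  have H: "fst (rowmul Y) = transpose_mat A *\<^sub>v Y" "snd (rowmul Y) \<le> \<mu>"
    using mu Y by (auto simp: rowmul_spec_def)
  have Hc: "transpose_mat A *\<^sub>v Y \<in> carrier_vec n" using A by (intro carrier_vecI) auto
  let ?f = "\<lambda>i. snd (dot_cnt (list_of_vec (transpose_mat A *\<^sub>v Y)) (list_of_vec (V (i - 1))))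
              + snd (dot_cnt (list_of_vec Y) (list_of_vec (V i)))"
  have "sum_list (map ?f [1..<d]) \<le> sum_list (map (\<lambda>_. 4 * n) [1..<d])"
  proof (rule sum_list_mono)
    fix i assume "i \<in> set [1..<d]"
    have "snd (dot_cnt (list_of_vec (transpose_mat A *\<^sub>v Y)) (list_of_vec (V (i - 1)))) \<le> 2 * n"
      using dot_cnt_snd[of "list_of_vec (transpose_mat A *\<^sub>v Y)" "list_of_vec (V (i - 1))"]
      unfolding length_list_of_vec carrier_vecD[OF Hc] .
    moreover have "snd (dot_cnt (list_of_vec Y) (list_of_vec (V i))) \<le> 2 * n"
      using dot_cnt_snd[of "list_of_vec Y" "list_of_vec (V i)"]
      unfolding length_list_of_vec carrier_vecD[OF Y] .
    ultimately show "?f i \<le> 4 * n" by simp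
  qed
  also have "\<dots> = (d - 1) * (4 * n)" by (simp add: sum_list_triv)
  also have "\<dots> \<le> 4 * d * n" by (simp add: diff_mult_distrib)
  finally have s: "sum_list (map ?f [1..<d]) \<le> 4 * d * n" .
  have eq: "snd (check_run rowmul d V Y) = snd (rowmul Y) + sum_list (map ?f [1..<d])"
  proof -
    have rY: "rowmul Y = (transpose_mat A *\<^sub>v Y, snd (rowmul Y))" using H(1) by (metis prod.collapse)
    show ?thesis by (rule check_snd_gen[of rowmul Y "transpose_mat A *\<^sub>v Y" "snd (rowmul Y)" d V, OF rY])
  qed
  show ?thesis unfolding eq by (rule add_mono[OF H(2) s])
qed

theorem mainTheorem4:
  fixes A :: "'a::field mat" and V :: "nat \<Rightarrow> 'a vec" and S :: "'a set"
    and n d \<mu> :: nat and rowmul :: "'a vec \<Rightarrow> 'a vec \<times> nat"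
  assumes A: "A \<in> carrier_mat n n"
    and V: "\<forall>i<d. V i \<in> carrier_vec n"
    and S: "finite S" "S \<noteq> {}"
    and mu: "rowmul_spec A n \<mu> rowmul"
  shows "((\<forall>i<d. V i = (A ^\<^sub>m i) *\<^sub>v V 0) \<longrightarrow>
            (\<forall>Y \<in> sample_space n S. fst (check_run rowmul d V Y)))
       \<and> ((\<exists>i<d. V i \<noteq> (A ^\<^sub>m i) *\<^sub>v V 0) \<longrightarrow>
            measure_pmf.prob (pmf_of_set (sample_space n S)) {Y. fst (check_run rowmul d V Y)}
              \<le> 1 / real (card S))
       \<and> (\<forall>Y \<in> carrier_vec n. snd (check_run rowmul d V Y) \<le> \<mu> + 4 * d * n)"
proof (intro conjI impI)
  show "\<forall>Y \<in> carrier_vec n. snd (check_run rowmul d V Y) \<le> \<mu> + 4 * d * n"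
    using check_snd[OF mu V A] by blast
next
  assume all: "\<forall>i<d. V i = (A ^\<^sub>m i) *\<^sub>v V 0"
  show "\<forall>Y \<in> sample_space n S. fst (check_run rowmul d V Y)"
  proof
    fix Y assume "Y \<in> sample_space n S"
    then have Y: "Y \<in> carrier_vec n" by (simp add: sample_space_def)
    show "fst (check_run rowmul d V Y)"
      unfolding check_fst[OF mu V A Y]
    proof
      fix i assume i: "i \<in> {1..<d}"
      then obtain k where k: "i = Suc k" by (cases i) auto
      have V0: "V 0 \<in> carrier_vec n" using V i by auto
      have "(transpose_mat A *\<^sub>v Y) \<bullet> V (i - 1) = Y \<bullet> (A *\<^sub>v V (i - 1))"
        using V i A Y by (intro transpose_vec_mult_scalar) auto
      also have "A *\<^sub>v V (i - 1) = A *\<^sub>v ((A ^\<^sub>m k) *\<^sub>v V 0)"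
      proof -
        have "k < d" using i k by simp
        then have "V k = (A ^\<^sub>m k) *\<^sub>v V 0" using all by blast
        then show ?thesis using k by simp
      qed
      also have "\<dots> = (A ^\<^sub>m i) *\<^sub>v V 0"
        unfolding k pow_mat_Suc_left[OF A] using A V0 by (simp add: assoc_mult_mat_vec[of _ n n _ n])
      also have "\<dots> = V i"
      proof -
        have "i < d" using i by simp
        then show ?thesis using all by metis
      qed
      finally show "(transpose_mat A *\<^sub>v Y) \<bullet> V (i - 1) = Y \<bullet> V i" .
    qed
  qed
next
  assume "\<exists>i<d. V i \<noteq> (A ^\<^sub>m i) *\<^sub>v V 0"
  then obtain i0 where i0: "i0 < d \<and> V i0 \<noteq> (A ^\<^sub>m i0) *\<^sub>v V 0" by blast
  define i where "i = (LEAST i. i < d \<and> V i \<noteq> (A ^\<^sub>m i) *\<^sub>v V 0)"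
  have i: "i < d" "V i \<noteq> (A ^\<^sub>m i) *\<^sub>v V 0"
    using LeastI[of "\<lambda>i. i < d \<and> V i \<noteq> (A ^\<^sub>m i) *\<^sub>v V 0", OF i0] unfolding i_def by auto
  have min: "\<And>j. j < i \<Longrightarrow> V j = (A ^\<^sub>m j) *\<^sub>v V 0"
  proof -
    fix j assume j: "j < i"
    have "\<not> (j < d \<and> V j \<noteq> (A ^\<^sub>m j) *\<^sub>v V 0)"
      using not_less_Least[of j "\<lambda>i. i < d \<and> V i \<noteq> (A ^\<^sub>m i) *\<^sub>v V 0"] j unfolding i_def by blast
    then show "V j = (A ^\<^sub>m j) *\<^sub>v V 0" using j i by auto
  qed
  have V0: "V 0 \<in> carrier_vec n" using V i by auto
  have "i \<noteq> 0" using i V0 A by auto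
  then obtain k where k: "i = Suc k" by (cases i) auto
  define w where "w = V i - (A ^\<^sub>m i) *\<^sub>v V 0"
  have Aic: "(A ^\<^sub>m i) *\<^sub>v V 0 \<in> carrier_vec n"
    using A V0 by (intro mult_mat_vec_carrier[of _ n n]) auto
  have Vi: "V i \<in> carrier_vec n" using V i by auto
  have wc: "w \<in> carrier_vec n" unfolding w_def using Vi Aic by (rule minus_carrier_vec)
  have wnz: "w \<noteq> 0\<^sub>v n"
  proof
    assume "w = 0\<^sub>v n"
    then have "V i = (A ^\<^sub>m i) *\<^sub>v V 0"
    proof (intro eq_vecI)
      fix k assume wz: "w = 0\<^sub>v n" and k: "k < dim_vec ((A ^\<^sub>m i) *\<^sub>v V 0)"
      have kn: "k < n" using k A by simp
      have "w $ k = 0" using wz kn by simp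
      moreover have "w $ k = V i $ k - ((A ^\<^sub>m i) *\<^sub>v V 0) $ k"
        unfolding w_def using kn A by simp
      ultimately show "V i $ k = ((A ^\<^sub>m i) *\<^sub>v V 0) $ k" by simp
    next
      show "dim_vec (V i) = dim_vec ((A ^\<^sub>m i) *\<^sub>v V 0)" using Vi A by simp
    qed
    then show False using i by simp
  qed
  define \<Omega> where "\<Omega> = sample_space n S"
  have sub: "{Y. fst (check_run rowmul d V Y)} \<inter> \<Omega> \<subseteq> {Y \<in> \<Omega>. Y \<bullet> w = 0}"
  proof clarify
    fix Y assume acc: "fst (check_run rowmul d V Y)" and YO: "Y \<in> \<Omega>"
    then have Y: "Y \<in> carrier_vec n" by (simp add: \<Omega>_def sample_space_def)
    have "(transpose_mat A *\<^sub>v Y) \<bullet> V (i - 1) = Y \<bullet> V i"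
    proof -
      have "i \<in> {1..<d}" using i k by simp
      then show ?thesis using acc unfolding check_fst[OF mu V A Y] by blast
    qed
    moreover have "(transpose_mat A *\<^sub>v Y) \<bullet> V (i - 1) = Y \<bullet> (A *\<^sub>v V (i - 1))"
      using V i A Y by (intro transpose_vec_mult_scalar) auto
    moreover have "A *\<^sub>v V (i - 1) = (A ^\<^sub>m i) *\<^sub>v V 0"
    proof -
      have "V k = (A ^\<^sub>m k) *\<^sub>v V 0" using min[of k] k by blast
      then have "V (i - 1) = (A ^\<^sub>m k) *\<^sub>v V 0" using k by simp
      then show ?thesis unfolding k pow_mat_Suc_left[OF A] using A V0 by (simp add: assoc_mult_mat_vec[of _ n n _ n])
    qed
    ultimately have "Y \<bullet> V i = Y \<bullet> ((A ^\<^sub>m i) *\<^sub>v V 0)" by simp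
    then show "Y \<bullet> w = 0"
      unfolding w_def using scalar_prod_minus_distrib[OF Y _ Aic] V i by simp
  qed
  have fin: "finite \<Omega>" and ne: "\<Omega> \<noteq> {}"
    using sample_space_finite[OF S(1)] sample_space_nonempty[OF S(2)] by (auto simp: \<Omega>_def)
  have cS: "card S > 0" using S by (simp add: card_gt_0_iff)
  have cO: "card \<Omega> > 0" using fin ne by (simp add: card_gt_0_iff)
  have "measure_pmf.prob (pmf_of_set \<Omega>) {Y. fst (check_run rowmul d V Y)}
      = real (card ({Y. fst (check_run rowmul d V Y)} \<inter> \<Omega>)) / real (card \<Omega>)"
    using fin ne by (simp add: measure_pmf_of_set Int_commute)
  also have "\<dots> \<le> real (card {Y \<in> \<Omega>. Y \<bullet> w = 0}) / real (card \<Omega>)"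
    using sub fin by (intro divide_right_mono of_nat_mono card_mono) auto
  also have "\<dots> \<le> 1 / real (card S)"
  proof -
    have "card {Y \<in> \<Omega>. Y \<bullet> w = 0} * card S \<le> card \<Omega>"
      using count_bound[OF wc wnz S] by (simp add: \<Omega>_def)
    then have "real (card {Y \<in> \<Omega>. Y \<bullet> w = 0}) * real (card S) \<le> real (card \<Omega>)"
      by (metis of_nat_le_iff of_nat_mult)
    then show ?thesis using cS cO by (simp add: field_simps)
  qed
  finally show "measure_pmf.prob (pmf_of_set (sample_space n S)) {Y. fst (check_run rowmul d V Y)}
              \<le> 1 / real (card S)" by (simp add: \<Omega>_def)
qed

end
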